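(* Let $(G;+,\cdot)$ be a nonassociative right semiring and let $f, g \colon G^n \to G$ be affine functions, $f(x_1,\dots,x_n) = \sum_{i=1}^n a_ix_i + c$, $g(x_1,\dots,x_n) = \sum_{i=1}^n b_ix_i + d$. Assume that $f$ and $g$ are linear (with $c=d=0$), or that $(G;+,\cdot)$ is cancellative. Then $f \equiv g$ if and only if $\langle a_1,\dots,a_n\rangle = \langle b_1,\dots,b_n\rangle$ (as multisets) and $c = d$.
   Context: A nonassociative right semiring is an algebra $(G;+,\cdot)$ such that $(G;+)$ is a commutative monoid with neutral element $0$; $(G;\cdot)$ is a groupoid (not necessarily associative) with a right identity $1$ ($a\cdot 1 = a$); multiplication right-distributes over addition ($(a+b)c = ac + bc$); and $a \cdot 0 = 0$ for all $a$. It is cancellative if $a+b = a+c$ implies $b = c$. A function $f \colon G^n \to G$ is affine if $f(x_1,\dots,x_n) = a_1x_1+\dots+a_nx_n + c$ for some $a_i, c \in G$; linear if $c = 0$. $\langle \cdot \rangle$ denotes a multiset. Two functions $f, g \colon A^n \to B$ are equivalent, $f \equiv g$, if there is a permutation $\sigma$ of $\{1,\dots,n\}$ with $f(x_1,\dots,x_n) = g(x_{\sigma(1)},\dots,x_{\sigma(n)})$ for all $(x_1,\dots,x_n)\in A^n$. *)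

theory Defs
  imports Main "HOL-Library.Multiset" "HOL-Combinatorics.Permutations"
begin

definition nonassoc_right_semiring ::
  "('a \<Rightarrow> 'a \<Rightarrow> 'a) \<Rightarrow> ('a \<Rightarrow> 'a \<Rightarrow> 'a) \<Rightarrow> 'a \<Rightarrow> 'a \<Rightarrow> bool" where
  "nonassoc_right_semiring pl tm z u \<longleftrightarrow>
     (\<forall>a b c. pl (pl a b) c = pl a (pl b c)) \<and>
     (\<forall>a b. pl a b = pl b a) \<and>
     (\<forall>a. pl a z = a) \<and>
     (\<forall>a. tm a u = a) \<and>
     (\<forall>a b c. tm (pl a b) c = pl (tm a c) (tm b c)) \<and>
     (\<forall>a. tm a z = z)"

definition cancellative_add :: "('a \<Rightarrow> 'a \<Rightarrow> 'a) \<Rightarrow> bool" where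
  "cancellative_add pl \<longleftrightarrow> (\<forall>a b c. pl a b = pl a c \<longrightarrow> b = c)"

fun gsum :: "('a \<Rightarrow> 'a \<Rightarrow> 'a) \<Rightarrow> 'a \<Rightarrow> nat \<Rightarrow> (nat \<Rightarrow> 'a) \<Rightarrow> 'a" where
  "gsum pl z 0 h = z"
| "gsum pl z (Suc n) h = pl (gsum pl z n h) (h n)"

text \<open>The affine function x \<mapsto> a_0 x_0 + ... + a_{n-1} x_{n-1} + c; a tuple of G^n is
 represented by a function nat \<Rightarrow> 'a of which only the first n entries matter.\<close>
definition affine_fun ::
  "('a \<Rightarrow> 'a \<Rightarrow> 'a) \<Rightarrow> ('a \<Rightarrow> 'a \<Rightarrow> 'a) \<Rightarrow> 'a \<Rightarrow> nat \<Rightarrow> (nat \<Rightarrow> 'a) \<Rightarrow> 'a \<Rightarrow> (nat \<Rightarrow> 'a) \<Rightarrow> 'a" where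
  "affine_fun pl tm z n a c x = pl (gsum pl z n (\<lambda>i. tm (a i) (x i))) c"

definition fun_equiv :: "nat \<Rightarrow> ((nat \<Rightarrow> 'a) \<Rightarrow> 'b) \<Rightarrow> ((nat \<Rightarrow> 'a) \<Rightarrow> 'b) \<Rightarrow> bool" where
  "fun_equiv n f g \<longleftrightarrow> (\<exists>\<sigma>. \<sigma> permutes {..<n} \<and> (\<forall>x. f x = g (\<lambda>i. x (\<sigma> i))))"

end

theory Submission
  imports Defs
begin

lemma gsum_F:
  assumes "comm_monoid pl z"
  shows "gsum pl z n h = comm_monoid_set.F pl z h {..<n}"
proof -
  interpret G: comm_monoid_set pl z by (rule comm_monoid_set.intro[OF assms])
  show ?thesis
    by (induction n) (simp_all add: lessThan_Suc G.insert G.commute)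
qed

theorem mainTheorem10:
  fixes pl tm :: "'a \<Rightarrow> 'a \<Rightarrow> 'a" and z u :: 'a
    and n :: nat and a b :: "nat \<Rightarrow> 'a" and c d :: 'a
  assumes "nonassoc_right_semiring pl tm z u"
    and "(c = z \<and> d = z) \<or> cancellative_add pl"
  shows "fun_equiv n (affine_fun pl tm z n a c) (affine_fun pl tm z n b d)
     \<longleftrightarrow> (mset (map a [0..<n]) = mset (map b [0..<n]) \<and> c = d)"
proof -
  have S: "\<And>a b c. pl (pl a b) c = pl a (pl b c)" "\<And>a b. pl a b = pl b a"
    "\<And>a. pl a z = a" "\<And>a. tm a u = a" "\<And>a. tm a z = z"
    using assms(1) unfolding nonassoc_right_semiring_def by blast+
  have cm: "comm_monoid pl z"
    by (unfold_locales) (use S in auto)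
  interpret G: comm_monoid_set pl z by (rule comm_monoid_set.intro[OF cm])
  have af: "\<And>a c x. affine_fun pl tm z n a c x = pl (G.F (\<lambda>i. tm (a i) (x i)) {..<n}) c"
    unfolding affine_fun_def gsum_F[OF cm] by simp
  have zero: "\<And>a c. affine_fun pl tm z n a c (\<lambda>_. z) = c"
    unfolding af by (simp add: S G.neutral)
  have unit: "\<And>a c j. j < n \<Longrightarrow> affine_fun pl tm z n a c (\<lambda>i. if i = j then u else z) = pl (a j) c"
  proof -
    fix a c and j :: nat assume j: "j < n"
    have "G.F (\<lambda>i. tm (a i) (if i = j then u else z)) {..<n}
        = pl (tm (a j) u) (G.F (\<lambda>i. tm (a i) (if i = j then u else z)) ({..<n} - {j}))"
      using G.remove[of "{..<n}" j] j by simp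
    also have "G.F (\<lambda>i. tm (a i) (if i = j then u else z)) ({..<n} - {j}) = z"
      by (rule G.neutral) (simp add: S)
    finally show "affine_fun pl tm z n a c (\<lambda>i. if i = j then u else z) = pl (a j) c"
      unfolding af by (simp add: S)
  qed
  show ?thesis
  proof
    assume "fun_equiv n (affine_fun pl tm z n a c) (affine_fun pl tm z n b d)"
    then obtain \<sigma> where p: "\<sigma> permutes {..<n}"
      and eq: "\<And>x. affine_fun pl tm z n a c x = affine_fun pl tm z n b d (\<lambda>i. x (\<sigma> i))"
      unfolding fun_equiv_def by blast
    have cd: "c = d" using eq[of "\<lambda>_. z"] zero by simp
    have ab: "a (\<sigma> k) = b k" if k: "k < n" for k
    proof -
      have sk: "\<sigma> k < n" using p k by (meson lessThan_iff permutes_in_image)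
      have inj: "\<And>i. (\<sigma> i = \<sigma> k) = (i = k)" using p by (meson permutes_inj injD)
      have "pl (a (\<sigma> k)) c = pl (b k) d"
        using eq[of "\<lambda>i. if i = \<sigma> k then u else z"] unit[OF sk, of a c] unit[OF k, of b d]
        by (simp add: inj)
      then have "pl c (a (\<sigma> k)) = pl c (b k)" using cd S(2) by metis
      show ?thesis
      proof (cases "cancellative_add pl")
        case True then show ?thesis using \<open>pl c (a (\<sigma> k)) = pl c (b k)\<close>
          unfolding cancellative_add_def by blast
      next
        case False then have "c = z" using assms(2) by blast
        then show ?thesis using \<open>pl c (a (\<sigma> k)) = pl c (b k)\<close> S(2) S(3) by metis
      qed
    qed
    have "mset (map a [0..<n]) = image_mset a (mset_set {..<n})"
      by (simp add: atLeast_upt)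
    also have "\<dots> = image_mset a (mset_set (\<sigma> ` {..<n}))"
      using p by (simp add: permutes_image)
    also have "\<dots> = image_mset a (image_mset \<sigma> (mset_set {..<n}))"
      using p by (simp add: image_mset_mset_set permutes_inj_on)
    also have "\<dots> = image_mset b (mset_set {..<n})"
      by (simp add: multiset.map_comp) (rule image_mset_cong, simp add: ab)
    also have "\<dots> = mset (map b [0..<n])" by (simp add: atLeast_upt)
    finally show "mset (map a [0..<n]) = mset (map b [0..<n]) \<and> c = d" using cd by simp
  next
    assume h: "mset (map a [0..<n]) = mset (map b [0..<n]) \<and> c = d"
    then obtain p where p: "p permutes {..<n}" and pl: "permute_list p (map b [0..<n]) = map a [0..<n]"
      by (metis mset_eq_permutation length_map length_upt minus_nat.diff_0)
    have ab: "a i = b (p i)" if "i < n" for i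
    proof -
      have "p i < n" using p that by (meson lessThan_iff permutes_in_image)
      have "map a [0..<n] ! i = permute_list p (map b [0..<n]) ! i" using pl by simp
      also have "\<dots> = map b [0..<n] ! p i" using that p by (simp add: permute_list_nth)
      finally show ?thesis using that \<open>p i < n\<close> by simp
    qed
    have "\<forall>x. affine_fun pl tm z n a c x = affine_fun pl tm z n b d (\<lambda>i. x (inv p i))"
    proof
      fix x
      have "G.F (\<lambda>i. tm (b i) (x (inv p i))) {..<n} = G.F (\<lambda>j. tm (b (p j)) (x (inv p (p j)))) {..<n}"
        using G.reindex_bij_betw[OF permutes_imp_bij[OF p], of "\<lambda>i. tm (b i) (x (inv p i))"] by simp
      also have "\<dots> = G.F (\<lambda>j. tm (a j) (x j)) {..<n}"
        by (rule G.cong) (auto simp: ab permutes_inverses(2)[OF p])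
      finally show "affine_fun pl tm z n a c x = affine_fun pl tm z n b d (\<lambda>i. x (inv p i))"
        unfolding af using h by simp
    qed
    then show "fun_equiv n (affine_fun pl tm z n a c) (affine_fun pl tm z n b d)"
      unfolding fun_equiv_def using permutes_inv[OF p] by blast
  qed
qed

end
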